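(* Let $s\in\mathbb{N}$, $s\le T$, and let $\phi$ be a monetary utility function on $\mathcal{R}^\infty_{s,T}$ such that $$\phi(X)={\rm ess}\inf_{a\in\mathcal{M}}\{\langle X,a\rangle_{s,T}-\phi^{\#}(a)\},\qquad X\in\mathcal{R}^\infty_{s,T},$$ for some $\mathcal{M}\subset D_{s,T}$. Suppose $\mathcal{M}$ is compact with respect to $\|\cdot\|_{A^1}$, stable under concatenation, and there is $b\in A^1_+$ with $\Delta a_t\le\Delta b_t$ for all $a\in\mathcal{M}$, $t\in\mathbb{N}$. Then for every $X\in\mathcal{R}^\infty_{s,T}$ there exists $a^X\in\mathcal{M}$ such that the insurance version $\Psi(X):=-\phi(-X)$ satisfies $$\Psi(X)=\langle X,a^X\rangle_{s,T}+\phi^{\#}(a^X).$$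
   Context: Filtered probability space $(\Omega,\mathcal{F},(\mathcal{F}_t)_{t\in\mathbb{N}},P)$, $\mathcal{F}_0$ trivial; a.s. (in)equalities; $T\in\mathbb{N}$ fixed. $\mathcal{R}^\infty$: bounded adapted processes; $A^1$: adapted $a$ with $\|a\|_{A^1}:=E\sum_t|\Delta a_t|<\infty$ ($a_{-1}=0$, $\Delta a_t=a_t-a_{t-1}$); $A^1_+$: those with all $\Delta a_t\ge0$. For stopping times $\tau\le\theta$: $\pi_{\tau,\theta}(X)_t=1_{\{\tau\le t\}}X_{t\wedge\theta}$, $\mathcal{R}^\infty_{\tau,\theta}=\pi_{\tau,\theta}\mathcal{R}^\infty$, $A^1_{\tau,\theta}=\pi_{\tau,\theta}A^1$, $\langle X,a\rangle_{\tau,\theta}=E(\sum_{t\in[\tau,\theta]\cap\mathbb{N}}X_t\Delta a_t\mid\mathcal{F}_\tau)$, $D_{s,T}=\{a\in\pi_{s,T}A^1_+:\langle1,a\rangle_{s,T}=1\}$. A monetary utility function on $\mathcal{R}^\infty_{s,T}$ is $\phi:\mathcal{R}^\infty_{s,T}\to L^\infty(\mathcal{F}_s)$ with $\phi(1_AX)=1_A\phi(X)$ for $A\in\mathcal{F}_s$, monotone, and $\phi(X+m1_{[s,\infty)})=\phi(X)+m$ for $m\in L^\infty(\mathcal{F}_s)$; $\mathcal{C}_\phi=\{X:\phi(X)\ge0\}$, $\phi^{\#}(a)={\rm ess}\inf_{X\in\mathcal{C}_\phi}\langle X,a\rangle_{s,T}$. Concatenation: for $a,b\in A^1_+$, a finite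 stopping time $\theta$ and $A\in\mathcal{F}_\theta$, $(a\oplus^\theta_Ab)_t=1_Ca_t+1_{C^c}\big(a_{\theta-1}+\frac{\langle1,a\rangle_{\theta,\infty}}{\langle1,b\rangle_{\theta,\infty}}(b_t-b_{\theta-1})\big)$, where $C=\{t<\theta\}\cup A^c\cup\{\langle1,b\rangle_{\theta,\infty}=0\}$. A set $\mathcal{M}\subset A^1_+$ is stable under concatenation if $a\oplus^\theta_Ab\in\mathcal{M}$ for all $a,b\in\mathcal{M}$, all finite stopping times $\theta$ and all $A\in\mathcal{F}_\theta$. *)

theory Defs
  imports "HOL-Probability.Probability"
begin

type_synonym 'a proc = "nat \<Rightarrow> 'a \<Rightarrow> real"

definition prev :: "'a proc \<Rightarrow> nat \<Rightarrow> 'a \<Rightarrow> real" where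
  "prev a t \<omega> = (if t = 0 then 0 else a (t - 1) \<omega>)"

definition dlt :: "'a proc \<Rightarrow> nat \<Rightarrow> 'a \<Rightarrow> real" where
  "dlt a t \<omega> = a t \<omega> - prev a t \<omega>"

definition adapted :: "(nat \<Rightarrow> 'a measure) \<Rightarrow> 'a proc \<Rightarrow> bool" where
  "adapted F X \<longleftrightarrow> (\<forall>t. X t \<in> borel_measurable (F t))"

definition Rinf :: "'a measure \<Rightarrow> (nat \<Rightarrow> 'a measure) \<Rightarrow> 'a proc set" where
  "Rinf M F = {X. adapted F X \<and> (\<exists>c. \<forall>t. AE \<omega> in M. \<bar>X t \<omega>\<bar> \<le> c)}"

definition A1norm :: "'a measure \<Rightarrow> 'a proc \<Rightarrow> ennreal" where
  "A1norm M a = (\<integral>\<^sup>+ \<omega>. (\<Sum>t. ennreal \<bar>dlt a t \<omega>\<bar>) \<partial>M)"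

definition A1 :: "'a measure \<Rightarrow> (nat \<Rightarrow> 'a measure) \<Rightarrow> 'a proc set" where
  "A1 M F = {a. adapted F a \<and> A1norm M a < \<infinity>}"

definition A1p :: "'a measure \<Rightarrow> (nat \<Rightarrow> 'a measure) \<Rightarrow> 'a proc set" where
  "A1p M F = {a \<in> A1 M F. \<forall>t. AE \<omega> in M. 0 \<le> dlt a t \<omega>}"

definition pist :: "nat \<Rightarrow> nat \<Rightarrow> 'a proc \<Rightarrow> 'a proc" where
  "pist s T X = (\<lambda>t \<omega>. if s \<le> t then X (min t T) \<omega> else 0)"

definition RsT :: "'a measure \<Rightarrow> (nat \<Rightarrow> 'a measure) \<Rightarrow> nat \<Rightarrow> nat \<Rightarrow> 'a proc set" where
  "RsT M F s T = pist s T ` Rinf M F"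

definition pairing :: "'a measure \<Rightarrow> (nat \<Rightarrow> 'a measure) \<Rightarrow> nat \<Rightarrow> nat \<Rightarrow> 'a proc \<Rightarrow> 'a proc \<Rightarrow> 'a \<Rightarrow> real" where
  "pairing M F s T X a = real_cond_exp M (F s) (\<lambda>\<omega>. \<Sum>t\<in>{s..T}. X t \<omega> * dlt a t \<omega>)"

definition DsT :: "'a measure \<Rightarrow> (nat \<Rightarrow> 'a measure) \<Rightarrow> nat \<Rightarrow> nat \<Rightarrow> 'a proc set" where
  "DsT M F s T = {a \<in> pist s T ` A1p M F. AE \<omega> in M. pairing M F s T (\<lambda>_ _. 1) a \<omega> = 1}"

definition Linf :: "'a measure \<Rightarrow> 'a measure \<Rightarrow> ('a \<Rightarrow> real) set" where
  "Linf M G = {m. m \<in> borel_measurable G \<and> (\<exists>c. AE \<omega> in M. \<bar>m \<omega>\<bar> \<le> c)}"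

definition monetary_utility ::
  "'a measure \<Rightarrow> (nat \<Rightarrow> 'a measure) \<Rightarrow> nat \<Rightarrow> nat \<Rightarrow> ('a proc \<Rightarrow> 'a \<Rightarrow> real) \<Rightarrow> bool" where
  "monetary_utility M F s T \<phi> \<longleftrightarrow>
     (\<forall>X\<in>RsT M F s T. \<phi> X \<in> Linf M (F s)) \<and>
     (\<forall>X\<in>RsT M F s T. \<forall>A\<in>sets (F s).
        AE \<omega> in M. \<phi> (\<lambda>t \<omega>'. indicator A \<omega>' * X t \<omega>') \<omega> = indicator A \<omega> * \<phi> X \<omega>) \<and>
     (\<forall>X\<in>RsT M F s T. \<forall>Y\<in>RsT M F s T.
        (\<forall>t. AE \<omega> in M. X t \<omega> \<le> Y t \<omega>) \<longrightarrow> (AE \<omega> in M. \<phi> X \<omega> \<le> \<phi> Y \<omega>)) \<and>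
     (\<forall>X\<in>RsT M F s T. \<forall>m\<in>Linf M (F s).
        AE \<omega> in M. \<phi> (\<lambda>t \<omega>'. X t \<omega>' + (if s \<le> t then m \<omega>' else 0)) \<omega> = \<phi> X \<omega> + m \<omega>)"

definition acc_set ::
  "'a measure \<Rightarrow> (nat \<Rightarrow> 'a measure) \<Rightarrow> nat \<Rightarrow> nat \<Rightarrow> ('a proc \<Rightarrow> 'a \<Rightarrow> real) \<Rightarrow> 'a proc set" where
  "acc_set M F s T \<phi> = {X \<in> RsT M F s T. AE \<omega> in M. 0 \<le> \<phi> X \<omega>}"

definition is_essinf :: "'a measure \<Rightarrow> ('a \<Rightarrow> ereal) set \<Rightarrow> ('a \<Rightarrow> ereal) \<Rightarrow> bool" where
  "is_essinf M S Y \<longleftrightarrow> Y \<in> borel_measurable M \<and> (\<forall>Z\<in>S. AE \<omega> in M. Y \<omega> \<le> Z \<omega>) \<and>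
     (\<forall>W\<in>borel_measurable M. (\<forall>Z\<in>S. AE \<omega> in M. W \<omega> \<le> Z \<omega>) \<longrightarrow> (AE \<omega> in M. W \<omega> \<le> Y \<omega>))"

definition essinf :: "'a measure \<Rightarrow> ('a \<Rightarrow> ereal) set \<Rightarrow> 'a \<Rightarrow> ereal" where
  "essinf M S = (SOME Y. is_essinf M S Y)"

definition phi_sharp ::
  "'a measure \<Rightarrow> (nat \<Rightarrow> 'a measure) \<Rightarrow> nat \<Rightarrow> nat \<Rightarrow> ('a proc \<Rightarrow> 'a \<Rightarrow> real) \<Rightarrow> 'a proc \<Rightarrow> 'a \<Rightarrow> ereal" where
  "phi_sharp M F s T \<phi> a =
     essinf M ((\<lambda>X \<omega>. ereal (pairing M F s T X a \<omega>)) ` acc_set M F s T \<phi>)"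

definition mass_from :: "'a measure \<Rightarrow> (nat \<Rightarrow> 'a measure) \<Rightarrow> ('a \<Rightarrow> nat) \<Rightarrow> 'a proc \<Rightarrow> 'a \<Rightarrow> real" where
  "mass_from M F \<theta> a = real_cond_exp M (filtration.pre_sigma (space M) F \<theta>)
      (\<lambda>\<omega>. \<Sum>t. (if \<theta> \<omega> \<le> t then dlt a t \<omega> else 0))"

definition concat ::
  "'a measure \<Rightarrow> (nat \<Rightarrow> 'a measure) \<Rightarrow> 'a proc \<Rightarrow> 'a proc \<Rightarrow> ('a \<Rightarrow> nat) \<Rightarrow> 'a set \<Rightarrow> 'a proc" where
  "concat M F a b \<theta> A = (\<lambda>t \<omega>.
     if t < \<theta> \<omega> \<or> \<omega> \<notin> A \<or> mass_from M F \<theta> b \<omega> = 0 then a t \<omega>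
     else prev a (\<theta> \<omega>) \<omega> + mass_from M F \<theta> a \<omega> / mass_from M F \<theta> b \<omega> * (b t \<omega> - prev b (\<theta> \<omega>) \<omega>))"

text \<open>Stopping times with values in nat are automatically finite.\<close>
definition stable_concat :: "'a measure \<Rightarrow> (nat \<Rightarrow> 'a measure) \<Rightarrow> 'a proc set \<Rightarrow> bool" where
  "stable_concat M F \<M> \<longleftrightarrow>
     (\<forall>a\<in>\<M>. \<forall>b\<in>\<M>. \<forall>\<theta>::'a \<Rightarrow> nat. stopping_time F \<theta> \<longrightarrow>
        (\<forall>A\<in>sets (filtration.pre_sigma (space M) F \<theta>). concat M F a b \<theta> A \<in> \<M>))"

definition A1_open :: "'a measure \<Rightarrow> (nat \<Rightarrow> 'a measure) \<Rightarrow> 'a proc set \<Rightarrow> bool" where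
  "A1_open M F U \<longleftrightarrow> U \<subseteq> A1 M F \<and> (\<forall>x\<in>U. \<exists>e>0. \<forall>y\<in>A1 M F.
      A1norm M (\<lambda>t \<omega>. y t \<omega> - x t \<omega>) < ennreal e \<longrightarrow> y \<in> U)"

definition A1_compact :: "'a measure \<Rightarrow> (nat \<Rightarrow> 'a measure) \<Rightarrow> 'a proc set \<Rightarrow> bool" where
  "A1_compact M F K \<longleftrightarrow> K \<subseteq> A1 M F \<and>
     (\<forall>\<U>. (\<forall>U\<in>\<U>. A1_open M F U) \<and> K \<subseteq> \<Union>\<U> \<longrightarrow> (\<exists>\<V>\<subseteq>\<U>. finite \<V> \<and> K \<subseteq> \<Union>\<V>))"

end

theory Submission
  imports Defs
begin


definition gg :: "ereal \<Rightarrow> real" where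
  "gg x = (if x = \<infinity> then pi/2 else if x = -\<infinity> then -pi/2 else arctan (real_of_ereal x))"

lemma gg_strict: "x < y \<Longrightarrow> gg x < gg y"
  apply (cases x; cases y)
  using arctan_bounded arctan_less_iff by (auto simp: gg_def)

lemma gg_mono: "x \<le> y \<Longrightarrow> gg x \<le> gg y"
  by (metis gg_strict order_le_less)

lemma gg_inj: "gg x = gg y \<Longrightarrow> x = y"
  by (metis gg_strict less_irrefl linorder_neqE)

lemma gg_bound: "\<bar>gg x\<bar> \<le> 2"
proof -
  have "\<bar>arctan r\<bar> \<le> 2" for r using arctan_bounded[of r] pi_less_4 by auto
  then show ?thesis using pi_less_4 pi_gt3 by (auto simp: gg_def)
qed

lemma gg_meas[measurable]: "f \<in> borel_measurable M \<Longrightarrow> (\<lambda>x. gg (f x)) \<in> borel_measurable M"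
proof -
  assume f: "f \<in> borel_measurable M"
  have 1: "{x \<in> space M. f x = c} \<in> sets M" for c :: ereal
  proof -
    have "f -` {c} \<inter> space M \<in> sets M" using f by (rule measurable_sets) auto
    moreover have "f -` {c} \<inter> space M = {x \<in> space M. f x = c}" by auto
    ultimately show ?thesis by simp
  qed
  show ?thesis unfolding gg_def using f 1 by measurable
qed



lemma gg_int: "prob_space M \<Longrightarrow> f \<in> borel_measurable M \<Longrightarrow> integrable M (\<lambda>x. gg (f x))"
  by (rule finite_measure.integrable_const_bound[where B=2])
     (auto simp: prob_space_def gg_bound)

lemma gg_lb: "-2 \<le> gg x"
  using gg_bound[of x] by linarith

lemma gg_int_bound: "prob_space M \<Longrightarrow> f \<in> borel_measurable M \<Longrightarrow> (\<integral>x. gg (f x) \<partial>M) \<ge> -2"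
proof -
  assume P: "prob_space M" and f: "f \<in> borel_measurable M"
  interpret prob_space M by fact
  have "(\<integral>x. -2 \<partial>M) \<le> (\<integral>x. gg (f x) \<partial>M)"
    apply (rule integral_mono) using gg_int[OF P f] gg_bound by (auto simp: abs_le_iff intro: gg_lb)
  then show ?thesis by (simp add: prob_space)
qed

lemma gg_AE_eq:
  assumes P: "prob_space M" and [measurable]: "f \<in> borel_measurable M" "g \<in> borel_measurable M"
    and le: "AE x in M. f x \<le> g x" and int: "(\<integral>x. gg (g x) \<partial>M) \<le> (\<integral>x. gg (f x) \<partial>M)"
  shows "AE x in M. f x = g x"
proof -
  interpret prob_space M by fact
  have i1: "integrable M (\<lambda>x. gg (f x))" "integrable M (\<lambda>x. gg (g x))" using gg_int[OF P] by auto
  have nn: "AE x in M. 0 \<le> gg (g x) - gg (f x)" using le by eventually_elim (auto intro: gg_mono)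
  have "(\<integral>x. gg (g x) - gg (f x) \<partial>M) = (\<integral>x. gg (g x) \<partial>M) - (\<integral>x. gg (f x) \<partial>M)"
    using i1 by simp
  moreover have "(\<integral>x. gg (g x) - gg (f x) \<partial>M) \<ge> 0" by (rule integral_nonneg_AE[OF nn])
  ultimately have "(\<integral>x. gg (g x) - gg (f x) \<partial>M) = 0" using int by linarith
  then have "AE x in M. gg (g x) - gg (f x) = 0"
    using integral_nonneg_eq_0_iff_AE[of M "\<lambda>x. gg (g x) - gg (f x)"] nn i1 by auto
  then show ?thesis by eventually_elim (auto intro: gg_inj)
qed

lemma essinf_exists:
  assumes P: "prob_space M" and G: "subalgebra M G"
    and S: "\<And>Z. Z \<in> S \<Longrightarrow> Z \<in> borel_measurable G"
  shows "\<exists>Y. Y \<in> borel_measurable G \<and> is_essinf M S Y"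
proof (cases "S = {}")
  case True
  have "(\<lambda>_. \<infinity>) \<in> borel_measurable G" by simp
  moreover have "is_essinf M S (\<lambda>_. \<infinity>)" unfolding is_essinf_def using True by auto
  ultimately show ?thesis by blast
next
  case False
  interpret prob_space M by fact
  have GM: "\<And>f. f \<in> borel_measurable G \<Longrightarrow> f \<in> borel_measurable M"
    using measurable_from_subalg[OF G] by blast
  define E where "E f = (\<integral>\<omega>. gg (INF n. f n \<omega>) \<partial>M)" for f :: "nat \<Rightarrow> 'a \<Rightarrow> ereal"
  define Q where "Q = {E f | f. \<forall>n. f n \<in> S}"
  define I where "I = Inf Q"
  have measINF: "(\<lambda>\<omega>. INF n. f n \<omega>) \<in> borel_measurable G" if "\<forall>n. f n \<in> S" for f :: "nat \<Rightarrow> 'a \<Rightarrow> ereal"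
    using S that by (intro borel_measurable_INF) (auto intro: countableI_type)
  have Qne: "Q \<noteq> {}" using False unfolding Q_def by auto
  have Qbdd: "bdd_below Q"
    unfolding Q_def E_def bdd_below_def
    using gg_int_bound[OF P] GM measINF by blast
  have "\<forall>k. \<exists>f. (\<forall>n. f n \<in> S) \<and> E f < I + 1 / real (Suc k)"
  proof
    fix k
    have "I < I + 1 / real (Suc k)" by simp
    from cInf_lessD[OF Qne this[unfolded I_def]] show "\<exists>f. (\<forall>n. f n \<in> S) \<and> E f < I + 1 / real (Suc k)"
      unfolding Q_def I_def by auto
  qed
  then obtain fk where fk: "\<And>k. \<forall>n. fk k n \<in> S" "\<And>k. E (fk k) < I + 1 / real (Suc k)"
    by metis
  define h where "h n = fk (fst (prod_decode n)) (snd (prod_decode n))" for n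
  have hS: "\<forall>n. h n \<in> S" unfolding h_def using fk by auto
  define Y where "Y \<omega> = (INF n. h n \<omega>)" for \<omega>
  have YG: "Y \<in> borel_measurable G" unfolding Y_def using measINF[OF hS] .
  have YM[measurable]: "Y \<in> borel_measurable M" using GM[OF YG] .
  have EhI: "E h \<ge> I" unfolding I_def using Qbdd hS by (auto simp: Q_def intro!: cInf_lower)
  have "E h \<le> E (fk k)" for k
  proof -
    have "Y \<omega> \<le> (INF n. fk k n \<omega>)" for \<omega>
    proof (rule INF_greatest)
      fix n
      have "h (prod_encode (k, n)) = fk k n" unfolding h_def by simp
      then show "Y \<omega> \<le> fk k n \<omega>" unfolding Y_def by (metis INF_lower UNIV_I)
    qed
    moreover have "(\<lambda>\<omega>. INF n. fk k n \<omega>) \<in> borel_measurable M" using GM measINF fk by blast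
    ultimately show ?thesis unfolding E_def Y_def[symmetric]
      by (intro integral_mono gg_int[OF P] gg_mono) auto
  qed
  then have "E h < I + 1 / real (Suc k)" for k using fk(2) le_less_trans by blast
  then have EhI2: "E h \<le> I"
  proof -
    assume a: "\<And>k. E h < I + 1 / real (Suc k)"
    show ?thesis
    proof (rule ccontr)
      assume "\<not> E h \<le> I"
      then obtain n where "n > 0" "inverse (real n) < E h - I"
        using ex_inverse_of_nat_less[of "E h - I"] by auto
      then have "1 / real (Suc (n - 1)) < E h - I" by (simp add: field_simps)
      with a[of "n - 1"] show False by simp
    qed
  qed
  have lower: "AE \<omega> in M. Y \<omega> \<le> Z \<omega>" if Z: "Z \<in> S" for Z
  proof -
    define h' where "h' = case_nat Z h"
    have h'S: "\<forall>n. h' n \<in> S" unfolding h'_def using Z hS by (auto split: nat.split)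
    have eq: "(INF n. h' n \<omega>) = min (Z \<omega>) (Y \<omega>)" for \<omega>
    proof (rule antisym)
      show "(INF n. h' n \<omega>) \<le> min (Z \<omega>) (Y \<omega>)"
      proof (rule min.boundedI)
        show "(INF n. h' n \<omega>) \<le> Z \<omega>" using INF_lower[of 0 UNIV "\<lambda>n. h' n \<omega>"] by (simp add: h'_def)
        show "(INF n. h' n \<omega>) \<le> Y \<omega>" unfolding Y_def
        proof (rule INF_greatest)
          fix n show "(INF n. h' n \<omega>) \<le> h n \<omega>"
            using INF_lower[of "Suc n" UNIV "\<lambda>n. h' n \<omega>"] by (simp add: h'_def)
        qed
      qed
      show "min (Z \<omega>) (Y \<omega>) \<le> (INF n. h' n \<omega>)"
      proof (rule INF_greatest)
        fix n show "min (Z \<omega>) (Y \<omega>) \<le> h' n \<omega>"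
          by (cases n) (auto simp: h'_def Y_def intro: min.coboundedI2 INF_lower)
      qed
    qed
    have "E h' \<ge> I" unfolding I_def using Qbdd h'S by (auto simp: Q_def intro!: cInf_lower)
    then have int: "(\<integral>\<omega>. gg (Y \<omega>) \<partial>M) \<le> (\<integral>\<omega>. gg (min (Z \<omega>) (Y \<omega>)) \<partial>M)"
      using EhI2 unfolding E_def eq Y_def by simp
    have ZM[measurable]: "Z \<in> borel_measurable M" using GM S Z by blast
    have "AE \<omega> in M. min (Z \<omega>) (Y \<omega>) = Y \<omega>"
      by (rule gg_AE_eq[OF P _ _ _ int]) auto
    then show ?thesis by eventually_elim (metis min.absorb_iff2)
  qed
  have greatest: "AE \<omega> in M. W \<omega> \<le> Y \<omega>"
    if W: "W \<in> borel_measurable M" "\<forall>Z\<in>S. AE \<omega> in M. W \<omega> \<le> Z \<omega>" for W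
  proof -
    have "AE \<omega> in M. \<forall>n. W \<omega> \<le> h n \<omega>" using W hS by (simp add: AE_all_countable)
    then show ?thesis unfolding Y_def by eventually_elim (auto intro: INF_greatest)
  qed
  have "is_essinf M S Y" unfolding is_essinf_def using YM lower greatest by blast
  then show ?thesis using YG by blast
qed

lemma essinf_unique:
  assumes "is_essinf M S Y1" "is_essinf M S Y2"
  shows "AE \<omega> in M. Y1 \<omega> = Y2 \<omega>"
proof -
  have "AE \<omega> in M. Y1 \<omega> \<le> Y2 \<omega>" "AE \<omega> in M. Y2 \<omega> \<le> Y1 \<omega>"
    using assms unfolding is_essinf_def by blast+
  then show ?thesis by eventually_elim auto
qed

lemma essinf_is:
  assumes "prob_space M" "subalgebra M G" "\<And>Z. Z \<in> S \<Longrightarrow> Z \<in> borel_measurable G"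
  shows "is_essinf M S (essinf M S)"
  unfolding essinf_def using essinf_exists[OF assms] by (metis someI_ex)



lemma AE_tendsto_of_summable:
  fixes f :: "nat \<Rightarrow> 'a \<Rightarrow> real"
  assumes [measurable]: "\<And>k. f k \<in> borel_measurable M" "f0 \<in> borel_measurable M"
    and fin: "(\<Sum>k. \<integral>\<^sup>+\<omega>. ennreal \<bar>f k \<omega> - f0 \<omega>\<bar> \<partial>M) < \<infinity>"
  shows "AE \<omega> in M. (\<lambda>k. f k \<omega>) \<longlonglongrightarrow> f0 \<omega>"
proof -
  have "(\<integral>\<^sup>+\<omega>. (\<Sum>k. ennreal \<bar>f k \<omega> - f0 \<omega>\<bar>) \<partial>M) = (\<Sum>k. \<integral>\<^sup>+\<omega>. ennreal \<bar>f k \<omega> - f0 \<omega>\<bar> \<partial>M)"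
    by (rule nn_integral_suminf) auto
  with fin have "(\<integral>\<^sup>+\<omega>. (\<Sum>k. ennreal \<bar>f k \<omega> - f0 \<omega>\<bar>) \<partial>M) \<noteq> \<infinity>" by simp
  then have "AE \<omega> in M. (\<Sum>k. ennreal \<bar>f k \<omega> - f0 \<omega>\<bar>) \<noteq> \<infinity>"
    by (intro nn_integral_PInf_AE) auto
  then show ?thesis
  proof eventually_elim
    case (elim \<omega>)
    then have "summable (\<lambda>k. \<bar>f k \<omega> - f0 \<omega>\<bar>)"
      by (intro summable_suminf_not_top) auto
    then have "(\<lambda>k. \<bar>f k \<omega> - f0 \<omega>\<bar>) \<longlonglongrightarrow> 0" by (rule summable_LIMSEQ_zero)
    then have "(\<lambda>k. f k \<omega> - f0 \<omega>) \<longlonglongrightarrow> 0" by (simp add: tendsto_rabs_zero_iff)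
    then show ?case by (simp add: LIM_zero_iff)
  qed
qed

lemma dlt_diff: "dlt (\<lambda>t \<omega>. a t \<omega> - b t \<omega>) t \<omega> = dlt a t \<omega> - dlt b t \<omega>"
  by (simp add: dlt_def prev_def)

lemma dlt_meas[measurable]: "(\<And>t. a t \<in> borel_measurable M) \<Longrightarrow> dlt a t \<in> borel_measurable M"
  unfolding dlt_def prev_def by (cases t) auto

locale setting =
  fixes M :: "'a measure" and F :: "nat \<Rightarrow> 'a measure" and s T :: nat
    and \<phi> :: "'a proc \<Rightarrow> 'a \<Rightarrow> real" and MM :: "'a proc set"
  assumes P: "prob_space M"
    and sub: "\<And>t. subalgebra M (F t)"
    and monoF: "\<And>t u. t \<le> u \<Longrightarrow> sets (F t) \<subseteq> sets (F u)"
    and sT: "s \<le> T"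
    and MD: "MM \<subseteq> DsT M F s T"
    and cpt: "A1_compact M F MM"
    and stab: "stable_concat M F MM"
begin

interpretation prob_space M by (rule P)

lemma subs: "subalgebra M (F s)" by (rule sub)

lemma fms: "finite_measure_subalgebra M (F s)"
  unfolding finite_measure_subalgebra_def finite_measure_subalgebra_axioms_def
  using subs finite_measure_axioms by auto

interpretation S: sigma_finite_subalgebra M "F s"
  by (rule finite_measure_subalgebra_is_sigma_finite[OF fms])

lemma FsM: "f \<in> borel_measurable (F s) \<Longrightarrow> f \<in> borel_measurable M"
  using measurable_from_subalg[OF subs] by blast

lemma adaptedM: "adapted F X \<Longrightarrow> X t \<in> borel_measurable M"
  unfolding adapted_def using measurable_from_subalg[OF sub] by blast

lemma R_elim:
  assumes "X \<in> RsT M F s T"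
  shows "\<And>t. X t \<in> borel_measurable M" "\<exists>c\<ge>0. AE \<omega> in M. \<forall>t. \<bar>X t \<omega>\<bar> \<le> c"
proof -
  obtain X' where X: "X = pist s T X'" "X' \<in> Rinf M F" using assms unfolding RsT_def by auto
  then obtain c where c: "\<forall>t. AE \<omega> in M. \<bar>X' t \<omega>\<bar> \<le> c" "adapted F X'" unfolding Rinf_def by auto
  show "X t \<in> borel_measurable M" for t
    unfolding X pist_def using adaptedM[OF c(2)] by (cases "s \<le> t") auto
  have "AE \<omega> in M. \<forall>t. \<bar>X' t \<omega>\<bar> \<le> c" using c(1) by (simp add: AE_all_countable)
  then have "AE \<omega> in M. \<forall>t. \<bar>X t \<omega>\<bar> \<le> max c 0"
    by eventually_elim (auto simp: X pist_def le_max_iff_disj)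
  then show "\<exists>c\<ge>0. AE \<omega> in M. \<forall>t. \<bar>X t \<omega>\<bar> \<le> c" by (intro exI[of _ "max c 0"]) auto
qed

lemma R_neg:
  assumes "X \<in> RsT M F s T"
  shows "(\<lambda>t \<omega>. - X t \<omega>) \<in> RsT M F s T"
proof -
  obtain X' where X: "X = pist s T X'" "X' \<in> Rinf M F" using assms unfolding RsT_def by auto
  have "(\<lambda>t \<omega>. - X' t \<omega>) \<in> Rinf M F"
    using X(2) unfolding Rinf_def adapted_def by auto
  moreover have "(\<lambda>t \<omega>. - X t \<omega>) = pist s T (\<lambda>t \<omega>. - X' t \<omega>)"
    unfolding X pist_def by (auto simp: fun_eq_iff)
  ultimately show ?thesis unfolding RsT_def by auto
qed

lemma M_elim:
  assumes "a \<in> MM"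
  shows "\<And>t. a t \<in> borel_measurable M" "a \<in> A1 M F"
    "\<And>t \<omega>. t < s \<Longrightarrow> a t \<omega> = 0"
    "\<And>t \<omega>. t < s \<or> T < t \<Longrightarrow> dlt a t \<omega> = 0"
    "AE \<omega> in M. pairing M F s T (\<lambda>_ _. 1) a \<omega> = 1"
proof -
  have aD: "a \<in> DsT M F s T" using assms MD by auto
  then obtain a' where a: "a = pist s T a'" "a' \<in> A1p M F" unfolding DsT_def by auto
  show "a \<in> A1 M F" using assms cpt unfolding A1_compact_def by auto
  then show "a t \<in> borel_measurable M" for t unfolding A1_def using adaptedM by auto
  show "t < s \<Longrightarrow> a t \<omega> = 0" for t \<omega> unfolding a pist_def by auto
  show "t < s \<or> T < t \<Longrightarrow> dlt a t \<omega> = 0" for t \<omega>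
  proof -
    assume "t < s \<or> T < t"
    then consider "t < s" | "T < t" by blast
    then show ?thesis
    proof cases
      case 1 then show ?thesis unfolding a pist_def dlt_def prev_def by auto
    next
      case 2
      then have "min t T = T" "min (t - 1) T = T" "s \<le> t - 1" "s \<le> t" "t \<noteq> 0" using sT by auto
      then show ?thesis unfolding a pist_def dlt_def prev_def by simp
    qed
  qed
  show "AE \<omega> in M. pairing M F s T (\<lambda>_ _. 1) a \<omega> = 1" using aD unfolding DsT_def by auto
qed

lemma A1_meas: "a \<in> A1 M F \<Longrightarrow> a t \<in> borel_measurable M"
  unfolding A1_def using adaptedM by auto

lemma A1_norm_meas: "a \<in> A1 M F \<Longrightarrow> (\<lambda>\<omega>. \<Sum>t. ennreal \<bar>dlt a t \<omega>\<bar>) \<in> borel_measurable M"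
  using A1_meas[of a] by measurable

lemma dlt_int:
  assumes "a \<in> A1 M F" shows "integrable M (dlt a t)"
proof (rule integrableI_bounded)
  have [measurable]: "\<And>t. a t \<in> borel_measurable M" using A1_meas assms by auto
  show "dlt a t \<in> borel_measurable M" by measurable
  have "(\<integral>\<^sup>+ x. ennreal (norm (dlt a t x)) \<partial>M) \<le> A1norm M a"
    unfolding A1norm_def
  proof (rule nn_integral_mono)
    fix x
    have "(\<Sum>t\<in>{t}. ennreal \<bar>dlt a t x\<bar>) \<le> (\<Sum>t. ennreal \<bar>dlt a t x\<bar>)"
      by (intro sum_le_suminf) auto
    then show "ennreal (norm (dlt a t x)) \<le> (\<Sum>t. ennreal \<bar>dlt a t x\<bar>)" by simp
  qed
  also have "\<dots> < \<infinity>" using assms unfolding A1_def by auto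
  finally show "(\<integral>\<^sup>+ x. ennreal (norm (dlt a t x)) \<partial>M) < \<infinity>" .
qed

lemma f_int:
  assumes X: "X \<in> RsT M F s T" and a: "a \<in> MM"
  shows "integrable M (\<lambda>\<omega>. \<Sum>t\<in>{s..T}. X t \<omega> * dlt a t \<omega>)"
proof (rule Bochner_Integration.integrable_sum)
  fix t
  obtain c where c: "c \<ge> 0" "AE \<omega> in M. \<forall>t. \<bar>X t \<omega>\<bar> \<le> c" using R_elim(2)[OF X] by auto
  have [measurable]: "\<And>t. a t \<in> borel_measurable M" "\<And>t. X t \<in> borel_measurable M"
    using M_elim(1)[OF a] R_elim(1)[OF X] by auto
  have i: "integrable M (\<lambda>\<omega>. c * dlt a t \<omega>)" using dlt_int[OF M_elim(2)[OF a]] by auto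
  show "integrable M (\<lambda>\<omega>. X t \<omega> * dlt a t \<omega>)"
  proof (rule Bochner_Integration.integrable_bound[OF i])
    show "(\<lambda>\<omega>. X t \<omega> * dlt a t \<omega>) \<in> borel_measurable M" by measurable
    show "AE \<omega> in M. norm (X t \<omega> * dlt a t \<omega>) \<le> norm (c * dlt a t \<omega>)"
      using c(2) by eventually_elim (use c(1) in \<open>auto simp: abs_mult intro: mult_right_mono\<close>)
  qed
qed

lemma f_meas[measurable]:
  assumes X: "X \<in> RsT M F s T" and a: "a \<in> MM"
  shows "(\<lambda>\<omega>. \<Sum>t\<in>{s..T}. X t \<omega> * dlt a t \<omega>) \<in> borel_measurable M"
  using f_int[OF assms] by auto

lemma pr_measF: "pairing M F s T X a \<in> borel_measurable (F s)"
  unfolding pairing_def by simp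

lemma pr_meas[measurable]: "pairing M F s T X a \<in> borel_measurable M"
  unfolding pairing_def by simp

lemma pr_neg:
  assumes X: "X \<in> RsT M F s T" and a: "a \<in> MM"
  shows "AE \<omega> in M. pairing M F s T (\<lambda>t \<omega>. - X t \<omega>) a \<omega> = - pairing M F s T X a \<omega>"
proof -
  have e: "(\<lambda>\<omega>. \<Sum>t\<in>{s..T}. - X t \<omega> * dlt a t \<omega>) = (\<lambda>\<omega>. (-1) * (\<Sum>t\<in>{s..T}. X t \<omega> * dlt a t \<omega>))"
    by (auto simp: sum_negf)
  show ?thesis unfolding pairing_def e
    using S.real_cond_exp_cmult[OF f_int[OF X a], of "-1"] by simp
qed

lemma pr_L1:
  assumes X: "X \<in> RsT M F s T" and c: "c \<ge> 0" "AE \<omega> in M. \<forall>t. \<bar>X t \<omega>\<bar> \<le> c"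
    and a: "a \<in> MM" and b: "b \<in> MM"
  shows "(\<integral>\<^sup>+\<omega>. ennreal \<bar>pairing M F s T X a \<omega> - pairing M F s T X b \<omega>\<bar> \<partial>M)
     \<le> ennreal c * A1norm M (\<lambda>t \<omega>. a t \<omega> - b t \<omega>)"
proof -
  have [measurable]: "\<And>t. a t \<in> borel_measurable M" "\<And>t. b t \<in> borel_measurable M" "\<And>t. X t \<in> borel_measurable M"
    using M_elim(1)[OF a] M_elim(1)[OF b] R_elim(1)[OF X] by auto
  define fa where "fa \<omega> = (\<Sum>t\<in>{s..T}. X t \<omega> * dlt a t \<omega>)" for \<omega>
  define fb where "fb \<omega> = (\<Sum>t\<in>{s..T}. X t \<omega> * dlt b t \<omega>)" for \<omega>
  define h where "h \<omega> = fa \<omega> - fb \<omega>" for \<omega>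
  have ia: "integrable M fa" and ib: "integrable M fb"
    unfolding fa_def fb_def using f_int[OF X a] f_int[OF X b] by auto
  have hm[measurable]: "h \<in> borel_measurable M" unfolding h_def using ia ib by auto
  have ae1: "AE \<omega> in M. pairing M F s T X a \<omega> - pairing M F s T X b \<omega> = real_cond_exp M (F s) h \<omega>"
    using S.real_cond_exp_diff[OF ia ib] unfolding pairing_def h_def fa_def fb_def by auto
  have ae2: "AE \<omega> in M. ennreal \<bar>real_cond_exp M (F s) h \<omega>\<bar> \<le> nn_cond_exp M (F s) (\<lambda>\<omega>. ennreal \<bar>h \<omega>\<bar>) \<omega>"
    using S.real_cond_exp_abs[OF hm] by simp
  have "(\<integral>\<^sup>+\<omega>. ennreal \<bar>pairing M F s T X a \<omega> - pairing M F s T X b \<omega>\<bar> \<partial>M)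
      \<le> (\<integral>\<^sup>+\<omega>. nn_cond_exp M (F s) (\<lambda>\<omega>. ennreal \<bar>h \<omega>\<bar>) \<omega> \<partial>M)"
  proof (rule nn_integral_mono_AE)
    show "AE \<omega> in M. ennreal \<bar>pairing M F s T X a \<omega> - pairing M F s T X b \<omega>\<bar> \<le> nn_cond_exp M (F s) (\<lambda>\<omega>. ennreal \<bar>h \<omega>\<bar>) \<omega>"
      using ae1 ae2 by eventually_elim simp
  qed
  also have "\<dots> = (\<integral>\<^sup>+\<omega>. ennreal \<bar>h \<omega>\<bar> \<partial>M)"
    using S.nn_cond_exp_intg[of "\<lambda>_. 1" "\<lambda>\<omega>. ennreal \<bar>h \<omega>\<bar>"] by simp
  also have "\<dots> \<le> (\<integral>\<^sup>+\<omega>. ennreal c * (\<Sum>t. ennreal \<bar>dlt (\<lambda>t \<omega>. a t \<omega> - b t \<omega>) t \<omega>\<bar>) \<partial>M)"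
  proof (rule nn_integral_mono_AE)
    show "AE \<omega> in M. ennreal \<bar>h \<omega>\<bar> \<le> ennreal c * (\<Sum>t. ennreal \<bar>dlt (\<lambda>t \<omega>. a t \<omega> - b t \<omega>) t \<omega>\<bar>)"
      using c(2)
    proof eventually_elim
      case (elim \<omega>)
      have "\<bar>h \<omega>\<bar> = \<bar>\<Sum>t\<in>{s..T}. X t \<omega> * (dlt a t \<omega> - dlt b t \<omega>)\<bar>"
        unfolding h_def fa_def fb_def by (simp add: sum_subtractf[symmetric] algebra_simps)
      also have "\<dots> \<le> (\<Sum>t\<in>{s..T}. \<bar>X t \<omega> * (dlt a t \<omega> - dlt b t \<omega>)\<bar>)" by (rule sum_abs)
      also have "\<dots> \<le> (\<Sum>t\<in>{s..T}. c * \<bar>dlt a t \<omega> - dlt b t \<omega>\<bar>)"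
        using elim c(1) by (intro sum_mono) (auto simp: abs_mult intro: mult_right_mono)
      finally have 1: "ennreal \<bar>h \<omega>\<bar> \<le> ennreal (\<Sum>t\<in>{s..T}. c * \<bar>dlt a t \<omega> - dlt b t \<omega>\<bar>)"
        by (rule ennreal_leI)
      also have "\<dots> = ennreal c * (\<Sum>t\<in>{s..T}. ennreal \<bar>dlt a t \<omega> - dlt b t \<omega>\<bar>)"
        using c(1) by (simp add: sum_distrib_left[symmetric] ennreal_mult sum_nonneg)
      also have "\<dots> \<le> ennreal c * (\<Sum>t. ennreal \<bar>dlt a t \<omega> - dlt b t \<omega>\<bar>)"
        by (intro mult_left_mono sum_le_suminf) auto
      finally show ?case by (simp add: dlt_diff)
    qed
  qed
  also have "\<dots> = ennreal c * A1norm M (\<lambda>t \<omega>. a t \<omega> - b t \<omega>)"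
    unfolding A1norm_def by (rule nn_integral_cmult) measurable
  finally show ?thesis .
qed

end



context setting
begin

interpretation prob_space M by (rule P)

abbreviation dist1 :: "'a proc \<Rightarrow> 'a proc \<Rightarrow> ennreal" where
  "dist1 y x \<equiv> A1norm M (\<lambda>t \<omega>. y t \<omega> - x t \<omega>)"

lemma dist1_self: "dist1 x x = 0"
  unfolding A1norm_def by (simp add: dlt_def prev_def)

lemma A1norm_zero: "A1norm M (\<lambda>t \<omega>. 0) = 0"
  unfolding A1norm_def by (simp add: dlt_def prev_def)

lemma dist1_tri:
  assumes "x \<in> A1 M F" "y \<in> A1 M F" "z \<in> A1 M F"
  shows "dist1 z x \<le> dist1 z y + dist1 y x"
proof -
  have [measurable]: "\<And>t. x t \<in> borel_measurable M" "\<And>t. y t \<in> borel_measurable M" "\<And>t. z t \<in> borel_measurable M"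
    using A1_meas assms by auto
  have "dist1 z x \<le> (\<integral>\<^sup>+\<omega>. (\<Sum>t. ennreal \<bar>dlt z t \<omega> - dlt y t \<omega>\<bar>) + (\<Sum>t. ennreal \<bar>dlt y t \<omega> - dlt x t \<omega>\<bar>) \<partial>M)"
    unfolding A1norm_def
  proof (rule nn_integral_mono)
    fix \<omega>
    have "(\<Sum>t. ennreal \<bar>dlt z t \<omega> - dlt x t \<omega>\<bar>) \<le> (\<Sum>t. ennreal \<bar>dlt z t \<omega> - dlt y t \<omega>\<bar> + ennreal \<bar>dlt y t \<omega> - dlt x t \<omega>\<bar>)"
    proof (rule suminf_le)
      fix t show "ennreal \<bar>dlt z t \<omega> - dlt x t \<omega>\<bar> \<le> ennreal \<bar>dlt z t \<omega> - dlt y t \<omega>\<bar> + ennreal \<bar>dlt y t \<omega> - dlt x t \<omega>\<bar>"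
        by (simp add: ennreal_plus[symmetric] del: ennreal_plus)
    qed auto
    also have "\<dots> = (\<Sum>t. ennreal \<bar>dlt z t \<omega> - dlt y t \<omega>\<bar>) + (\<Sum>t. ennreal \<bar>dlt y t \<omega> - dlt x t \<omega>\<bar>)"
      by (rule suminf_add[symmetric]) auto
    finally show "(\<Sum>t. ennreal \<bar>dlt (\<lambda>t \<omega>. z t \<omega> - x t \<omega>) t \<omega>\<bar>) \<le> (\<Sum>t. ennreal \<bar>dlt z t \<omega> - dlt y t \<omega>\<bar>) + (\<Sum>t. ennreal \<bar>dlt y t \<omega> - dlt x t \<omega>\<bar>)"
      by (simp add: dlt_diff)
  qed
  also have "\<dots> = dist1 z y + dist1 y x"
    unfolding A1norm_def dlt_diff by (rule nn_integral_add) auto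
  finally show ?thesis .
qed

definition ball1 :: "'a proc \<Rightarrow> real \<Rightarrow> 'a proc set" where
  "ball1 x e = {y \<in> A1 M F. dist1 y x < ennreal e}"

lemma ball1_open:
  assumes x: "x \<in> A1 M F" shows "A1_open M F (ball1 x e)"
  unfolding A1_open_def
proof safe
  show "y \<in> A1 M F" if "y \<in> ball1 x e" for y using that by (auto simp: ball1_def)
  fix y assume yb: "y \<in> ball1 x e"
  then have y: "y \<in> A1 M F" and lt: "dist1 y x < ennreal e" by (auto simp: ball1_def)
  obtain r where r: "dist1 y x = ennreal r" "r \<ge> 0"
    using lt by (cases "dist1 y x" rule: ennreal_cases) auto
  with lt have re: "r < e" by (simp add: ennreal_less_iff)
  show "\<exists>d>0. \<forall>z\<in>A1 M F. dist1 z y < ennreal d \<longrightarrow> z \<in> ball1 x e"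
  proof (intro exI[of _ "e - r"] conjI ballI impI)
    show "e - r > 0" using re by simp
    fix z assume z: "z \<in> A1 M F" and zl: "dist1 z y < ennreal (e - r)"
    obtain q where q: "dist1 z y = ennreal q" "q \<ge> 0"
      using zl by (cases "dist1 z y" rule: ennreal_cases) auto
    with zl have qe: "q < e - r" by (simp add: ennreal_less_iff)
    have "dist1 z x \<le> dist1 z y + dist1 y x" by (rule dist1_tri[OF x y z])
    also have "\<dots> = ennreal (q + r)" using q r by (simp add: ennreal_plus)
    also have "\<dots> < ennreal e" using qe q r by (intro ennreal_lessI) auto
    finally show "z \<in> ball1 x e" using z by (auto simp: ball1_def)
  qed
qed

lemma cluster:
  fixes b :: "nat \<Rightarrow> 'a proc"
  assumes b: "\<And>n. b n \<in> MM"
  shows "\<exists>x\<in>MM. \<forall>e>0. \<forall>N. \<exists>n\<ge>N. dist1 (b n) x < ennreal e"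
proof (rule ccontr)
  assume "\<not> ?thesis"
  then have "\<forall>x\<in>MM. \<exists>e. e > 0 \<and> (\<exists>N. \<forall>n\<ge>N. \<not> dist1 (b n) x < ennreal e)" by auto
  then obtain E Nf where EN: "\<And>x. x \<in> MM \<Longrightarrow> E x > 0 \<and> (\<forall>n\<ge>Nf x. \<not> dist1 (b n) x < ennreal (E x))"
    by metis
  have MA: "MM \<subseteq> A1 M F" using cpt unfolding A1_compact_def by auto
  define U where "U = (\<lambda>x. ball1 x (E x)) ` MM"
  have "\<forall>V\<in>U. A1_open M F V" unfolding U_def using ball1_open MA by auto
  moreover have "MM \<subseteq> \<Union>U"
  proof
    fix x assume x: "x \<in> MM"
    then have "x \<in> ball1 x (E x)" using MA EN[OF x] by (auto simp: ball1_def A1norm_zero)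
    then show "x \<in> \<Union>U" using x unfolding U_def by auto
  qed
  ultimately obtain V where V: "V \<subseteq> U" "finite V" "MM \<subseteq> \<Union>V"
    using cpt unfolding A1_compact_def by meson
  then obtain C where C: "C \<subseteq> MM" "finite C" "V = (\<lambda>x. ball1 x (E x)) ` C"
    unfolding U_def by (meson finite_subset_image)
  define N where "N = (\<Sum>x\<in>C. Nf x)"
  have "b N \<in> \<Union>V" using V(3) b by auto
  then obtain x where x: "x \<in> C" "b N \<in> ball1 x (E x)" using C(3) by auto
  have "Nf x \<le> N" unfolding N_def using C(2) x(1) by (intro member_le_sum) auto
  then show False using EN[of x] x C(1) by (auto simp: ball1_def)
qed

lemma fastsub:
  fixes b :: "nat \<Rightarrow> 'a proc"
  assumes cl: "\<forall>e>0. \<forall>N. \<exists>n\<ge>N. dist1 (b n) x < ennreal e"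
  shows "\<exists>r. strict_mono r \<and> (\<forall>k. dist1 (b (r k)) x < ennreal ((1/2)^k))"
proof -
  define nxt where "nxt N k = (SOME n. n \<ge> N \<and> dist1 (b n) x < ennreal ((1/2)^k))" for N k :: nat
  have nxt: "nxt N k \<ge> N \<and> dist1 (b (nxt N k)) x < ennreal ((1/2)^k)" for N k
  proof -
    have "\<exists>n\<ge>N. dist1 (b n) x < ennreal ((1/2)^k)" using cl by simp
    then show ?thesis unfolding nxt_def by (rule someI_ex[where P="\<lambda>n. n \<ge> N \<and> _ n"]) 
  qed
  define r where "r = rec_nat (nxt 0 0) (\<lambda>k rk. nxt (Suc rk) (Suc k))"
  have r0: "r 0 = nxt 0 0" and rS: "r (Suc k) = nxt (Suc (r k)) (Suc k)" for k
    unfolding r_def by simp_all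
  have "strict_mono r"
    unfolding strict_mono_Suc_iff using nxt rS by (metis Suc_le_lessD)
  moreover have "dist1 (b (r k)) x < ennreal ((1/2)^k)" for k
  proof -
    have "\<exists>N. r k = nxt N k" by (cases k) (auto simp: r0 rS)
    then show ?thesis using nxt by metis
  qed
  ultimately show ?thesis by blast
qed

end



lemma rce_cong_sets:
  assumes "space G1 = space G2" "sets G1 = sets G2"
  shows "real_cond_exp M G1 f = real_cond_exp M G2 f"
  unfolding real_cond_exp_def nn_cond_exp_def restr_to_subalg_def subalgebra_def
  using assms by simp

context setting
begin

interpretation prob_space M by (rule P)

interpretation S: sigma_finite_subalgebra M "F s"
  by (rule finite_measure_subalgebra_is_sigma_finite[OF fms])

abbreviation psh :: "'a proc \<Rightarrow> 'a \<Rightarrow> ereal" where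
  "psh a \<equiv> phi_sharp M F s T \<phi> a"

abbreviation pr :: "'a proc \<Rightarrow> 'a proc \<Rightarrow> 'a \<Rightarrow> real" where
  "pr Y a \<equiv> pairing M F s T Y a"

lemma pr_measF_ereal: "(\<lambda>\<omega>. ereal (pr Y a \<omega>)) \<in> borel_measurable (F s)"
  using pr_measF[of Y a] by (rule borel_measurable_ereal)

lemma psh_is: "is_essinf M ((\<lambda>Y \<omega>. ereal (pr Y a \<omega>)) ` acc_set M F s T \<phi>) (psh a)"
  unfolding phi_sharp_def
  by (rule essinf_is[OF P subs]) (auto intro: pr_measF_ereal)

lemma psh_meas[measurable]: "psh a \<in> borel_measurable M"
  using psh_is unfolding is_essinf_def by blast

lemma psh_version: "\<exists>\<Phi>. \<Phi> \<in> borel_measurable (F s) \<and> (AE \<omega> in M. \<Phi> \<omega> = psh a \<omega>)"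
proof -
  obtain Y where Y: "Y \<in> borel_measurable (F s)"
    "is_essinf M ((\<lambda>Y \<omega>. ereal (pr Y a \<omega>)) ` acc_set M F s T \<phi>) Y"
    using essinf_exists[OF P subs, of "(\<lambda>Y \<omega>. ereal (pr Y a \<omega>)) ` acc_set M F s T \<phi>"]
      pr_measF_ereal by blast
  then show ?thesis using essinf_unique[OF Y(2) psh_is] by blast
qed

lemma psh_le: "Y \<in> acc_set M F s T \<phi> \<Longrightarrow> AE \<omega> in M. psh a \<omega> \<le> ereal (pr Y a \<omega>)"
  using psh_is[of a] unfolding is_essinf_def by auto

lemma psh_greatest:
  assumes "W \<in> borel_measurable M" "\<And>Y. Y \<in> acc_set M F s T \<phi> \<Longrightarrow> AE \<omega> in M. W \<omega> \<le> ereal (pr Y a \<omega>)"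
  shows "AE \<omega> in M. W \<omega> \<le> psh a \<omega>"
  using psh_is[of a] assms unfolding is_essinf_def by auto

lemma mass_eq:
  assumes a: "a \<in> MM"
  shows "mass_from M F (\<lambda>_. s) a = pr (\<lambda>_ _. 1) a"
proof -
  interpret filtration "space M" F
    by unfold_locales (use sub monoF in \<open>auto simp: subalgebra_def\<close>)
  have st: "stopping_time F (\<lambda>_. s)" by (rule stopping_time_const)
  have sets: "sets (pre_sigma (\<lambda>_. s)) = sets (F s)"
  proof -
    have "{A. \<forall>t. {\<omega>\<in>A. s \<le> t} \<in> sets (F t)} = sets (F s)"
    proof safe
      fix A assume "\<forall>t. {\<omega>\<in>A. s \<le> t} \<in> sets (F t)"
      then have "{\<omega>\<in>A. s \<le> s} \<in> sets (F s)" by blast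
      then show "A \<in> sets (F s)" by simp
    next
      fix A t assume "A \<in> sets (F s)"
      then show "{\<omega>\<in>A. s \<le> t} \<in> sets (F t)"
        using monoF[of s t] by (cases "s \<le> t") auto
    qed
    then show ?thesis by (rule trans[OF sets_pre_sigma[OF st]])
  qed
  have sp: "space (pre_sigma (\<lambda>_. s)) = space (F s)" using space_pre_sigma space_F by simp
  have fe: "(\<lambda>\<omega>. \<Sum>t. (if s \<le> t then dlt a t \<omega> else 0)) = (\<lambda>\<omega>. \<Sum>t\<in>{s..T}. 1 * dlt a t \<omega>)"
  proof
    fix \<omega>
    have "(\<Sum>t. (if s \<le> t then dlt a t \<omega> else 0)) = (\<Sum>t\<in>{s..T}. (if s \<le> t then dlt a t \<omega> else 0))"
      by (rule suminf_finite) (auto simp: M_elim(4)[OF a])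
    then show "(\<Sum>t. (if s \<le> t then dlt a t \<omega> else 0)) = (\<Sum>t\<in>{s..T}. 1 * dlt a t \<omega>)" by simp
  qed
  show ?thesis unfolding mass_from_def pairing_def fe
    using rce_cong_sets[OF sp sets] by simp
qed

lemma concat_in:
  assumes a1: "a1 \<in> MM" and a2: "a2 \<in> MM" and A: "A \<in> sets (F s)"
  shows "concat M F a1 a2 (\<lambda>_. s) A \<in> MM"
    "AE \<omega> in M. \<forall>t. concat M F a1 a2 (\<lambda>_. s) A t \<omega> = (if \<omega> \<in> A then a2 t \<omega> else a1 t \<omega>)"
proof -
  interpret filtration "space M" F
    by unfold_locales (use sub monoF in \<open>auto simp: subalgebra_def\<close>)
  have st: "stopping_time F (\<lambda>_. s)" by (rule stopping_time_const)
  have "A \<in> sets (pre_sigma (\<lambda>_. s))"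
  proof (rule sets_pre_sigmaI[OF st])
    fix t show "{\<omega>\<in>A. s \<le> t} \<in> sets (F t)"
      using monoF[of s t] A by (cases "s \<le> t") auto
  qed
  then show "concat M F a1 a2 (\<lambda>_. s) A \<in> MM"
    using stab a1 a2 st unfolding stable_concat_def by blast
  have "AE \<omega> in M. mass_from M F (\<lambda>_. s) a1 \<omega> = 1 \<and> mass_from M F (\<lambda>_. s) a2 \<omega> = 1"
    using M_elim(5)[OF a1] M_elim(5)[OF a2] unfolding mass_eq[OF a1] mass_eq[OF a2] by auto
  then show "AE \<omega> in M. \<forall>t. concat M F a1 a2 (\<lambda>_. s) A t \<omega> = (if \<omega> \<in> A then a2 t \<omega> else a1 t \<omega>)"
  proof eventually_elim
    case (elim \<omega>)
    have p1: "prev a1 s \<omega> = 0" and p2: "prev a2 s \<omega> = 0"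
      unfolding prev_def using M_elim(3)[OF a1] M_elim(3)[OF a2] by auto
    show ?case
    proof
      fix t
      show "concat M F a1 a2 (\<lambda>_. s) A t \<omega> = (if \<omega> \<in> A then a2 t \<omega> else a1 t \<omega>)"
        unfolding concat_def using elim p1 p2 M_elim(3)[OF a1, of t] M_elim(3)[OF a2, of t] by auto
    qed
  qed
qed

lemma pr_concat:
  assumes Y: "Y \<in> RsT M F s T" and a1: "a1 \<in> MM" and a2: "a2 \<in> MM" and c: "c \<in> MM"
    and A: "A \<in> sets (F s)"
    and ce: "AE \<omega> in M. \<forall>t. c t \<omega> = (if \<omega> \<in> A then a2 t \<omega> else a1 t \<omega>)"
  shows "AE \<omega> in M. pr Y c \<omega> = (if \<omega> \<in> A then pr Y a2 \<omega> else pr Y a1 \<omega>)"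
proof -
  have AM: "A \<in> sets M" using A subs unfolding subalgebra_def by auto
  have A'F: "space M - A \<in> sets (F s)" using A subs unfolding subalgebra_def
    by (metis sets.compl_sets)
  have A'M: "space M - A \<in> sets M" using AM by auto
  define f1 where "f1 \<omega> = (\<Sum>t\<in>{s..T}. Y t \<omega> * dlt a1 t \<omega>)" for \<omega>
  define f2 where "f2 \<omega> = (\<Sum>t\<in>{s..T}. Y t \<omega> * dlt a2 t \<omega>)" for \<omega>
  define fc where "fc \<omega> = (\<Sum>t\<in>{s..T}. Y t \<omega> * dlt c t \<omega>)" for \<omega>
  have i1: "integrable M f1" and i2: "integrable M f2" and ic: "integrable M fc"
    unfolding f1_def f2_def fc_def using f_int Y a1 a2 c by auto
  have i1': "integrable M (\<lambda>\<omega>. indicator (space M - A) \<omega> * f1 \<omega>)"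
    using integrable_mult_indicator[OF A'M i1] by simp
  have i2': "integrable M (\<lambda>\<omega>. indicator A \<omega> * f2 \<omega>)"
    using integrable_mult_indicator[OF AM i2] by simp
  have [measurable]: "f1 \<in> borel_measurable M" "f2 \<in> borel_measurable M" "fc \<in> borel_measurable M"
    using i1 i2 ic by auto
  have [measurable]: "A \<in> sets M" using AM .
  have "AE \<omega> in M. fc \<omega> = indicator A \<omega> * f2 \<omega> + indicator (space M - A) \<omega> * f1 \<omega>"
    using ce AE_space
  proof eventually_elim
    case (elim \<omega>)
    have d: "dlt c t \<omega> = (if \<omega> \<in> A then dlt a2 t \<omega> else dlt a1 t \<omega>)" for t
      using elim unfolding dlt_def prev_def by auto
    show ?case unfolding fc_def f1_def f2_def d using elim by (auto simp: indicator_def)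
  qed
  then have "AE \<omega> in M. real_cond_exp M (F s) fc \<omega> =
      real_cond_exp M (F s) (\<lambda>\<omega>. indicator A \<omega> * f2 \<omega> + indicator (space M - A) \<omega> * f1 \<omega>) \<omega>"
    by (intro S.real_cond_exp_cong) auto
  moreover have "AE \<omega> in M. real_cond_exp M (F s) (\<lambda>\<omega>. indicator A \<omega> * f2 \<omega> + indicator (space M - A) \<omega> * f1 \<omega>) \<omega>
     = real_cond_exp M (F s) (\<lambda>\<omega>. indicator A \<omega> * f2 \<omega>) \<omega> + real_cond_exp M (F s) (\<lambda>\<omega>. indicator (space M - A) \<omega> * f1 \<omega>) \<omega>"
    by (rule S.real_cond_exp_add[OF i2' i1'])
  moreover have "AE \<omega> in M. real_cond_exp M (F s) (\<lambda>\<omega>. indicator A \<omega> * f2 \<omega>) \<omega> = indicator A \<omega> * real_cond_exp M (F s) f2 \<omega>"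
    by (rule S.real_cond_exp_mult) (use A i2' in auto)
  moreover have "AE \<omega> in M. real_cond_exp M (F s) (\<lambda>\<omega>. indicator (space M - A) \<omega> * f1 \<omega>) \<omega> = indicator (space M - A) \<omega> * real_cond_exp M (F s) f1 \<omega>"
    by (rule S.real_cond_exp_mult) (use A'F i1' in auto)
  ultimately show ?thesis using AE_space
    unfolding pairing_def f1_def[symmetric] f2_def[symmetric] fc_def[symmetric]
    by eventually_elim (auto simp: indicator_def)
qed

lemma psh_concat:
  assumes a1: "a1 \<in> MM" and a2: "a2 \<in> MM" and c: "c \<in> MM"
    and A: "A \<in> sets (F s)"
    and ce: "AE \<omega> in M. \<forall>t. c t \<omega> = (if \<omega> \<in> A then a2 t \<omega> else a1 t \<omega>)"
  shows "AE \<omega> in M. (if \<omega> \<in> A then psh a2 \<omega> else psh a1 \<omega>) \<le> psh c \<omega>"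
proof (rule psh_greatest)
  have AM[measurable]: "A \<in> sets M" using A subs unfolding subalgebra_def by auto
  show "(\<lambda>\<omega>. if \<omega> \<in> A then psh a2 \<omega> else psh a1 \<omega>) \<in> borel_measurable M" by measurable
  fix Y assume Y: "Y \<in> acc_set M F s T \<phi>"
  then have YR: "Y \<in> RsT M F s T" unfolding acc_set_def by auto
  show "AE \<omega> in M. (if \<omega> \<in> A then psh a2 \<omega> else psh a1 \<omega>) \<le> ereal (pr Y c \<omega>)"
    using pr_concat[OF YR a1 a2 c A ce] psh_le[OF Y, of a1] psh_le[OF Y, of a2]
    by eventually_elim auto
qed

abbreviation V :: "'a proc \<Rightarrow> 'a proc \<Rightarrow> 'a \<Rightarrow> ereal" where
  "V X a \<omega> \<equiv> ereal (pr X a \<omega>) + psh a \<omega>"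

lemma directed:
  assumes X: "X \<in> RsT M F s T" and a1: "a1 \<in> MM" and a2: "a2 \<in> MM"
  shows "\<exists>c\<in>MM. AE \<omega> in M. V X a1 \<omega> \<le> V X c \<omega> \<and> V X a2 \<omega> \<le> V X c \<omega>"
proof -
  obtain \<Phi>1 where P1: "\<Phi>1 \<in> borel_measurable (F s)" "AE \<omega> in M. \<Phi>1 \<omega> = psh a1 \<omega>"
    using psh_version by blast
  obtain \<Phi>2 where P2: "\<Phi>2 \<in> borel_measurable (F s)" "AE \<omega> in M. \<Phi>2 \<omega> = psh a2 \<omega>"
    using psh_version by blast
  define A where "A = {\<omega> \<in> space (F s). ereal (pr X a1 \<omega>) + \<Phi>1 \<omega> < ereal (pr X a2 \<omega>) + \<Phi>2 \<omega>}"
  have [measurable]: "\<Phi>1 \<in> borel_measurable (F s)" "\<Phi>2 \<in> borel_measurable (F s)"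
    "pr X a1 \<in> borel_measurable (F s)" "pr X a2 \<in> borel_measurable (F s)"
    using P1 P2 pr_measF by auto
  have A: "A \<in> sets (F s)" unfolding A_def by measurable
  have spF: "space (F s) = space M" using subs unfolding subalgebra_def by auto
  define c where "c = concat M F a1 a2 (\<lambda>_. s) A"
  have c: "c \<in> MM" "AE \<omega> in M. \<forall>t. c t \<omega> = (if \<omega> \<in> A then a2 t \<omega> else a1 t \<omega>)"
    unfolding c_def using concat_in[OF a1 a2 A] by auto
  have "AE \<omega> in M. V X a1 \<omega> \<le> V X c \<omega> \<and> V X a2 \<omega> \<le> V X c \<omega>"
    using pr_concat[OF X a1 a2 c(1) A c(2)] psh_concat[OF a1 a2 c(1) A c(2)] P1(2) P2(2) AE_space
  proof eventually_elim
    case (elim \<omega>)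
    show ?case
    proof (cases "\<omega> \<in> A")
      case True
      then have "V X a1 \<omega> < V X a2 \<omega>" using elim unfolding A_def by auto
      moreover have "V X a2 \<omega> \<le> V X c \<omega>" using elim True by (auto intro: add_mono)
      ultimately show ?thesis by auto
    next
      case False
      then have "V X a2 \<omega> \<le> V X a1 \<omega>" using elim spF unfolding A_def by auto
      moreover have "V X a1 \<omega> \<le> V X c \<omega>" using elim False by (auto intro: add_mono)
      ultimately show ?thesis by auto
    qed
  qed
  then show ?thesis using c(1) by blast
qed

end



context setting
begin

interpretation prob_space M by (rule P)

lemma V_meas[measurable]: "(\<lambda>\<omega>. V X a \<omega>) \<in> borel_measurable M"
  by measurable

lemma pr_conv:
  fixes b :: "nat \<Rightarrow> 'a proc"
  assumes Y: "Y \<in> RsT M F s T" and b: "\<And>k. b k \<in> MM" and x: "x \<in> MM"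
    and d: "\<And>k. dist1 (b k) x < ennreal ((1/2)^k)"
  shows "AE \<omega> in M. (\<lambda>k. pr Y (b k) \<omega>) \<longlonglongrightarrow> pr Y x \<omega>"
proof (rule AE_tendsto_of_summable)
  obtain c where c: "c \<ge> 0" "AE \<omega> in M. \<forall>t. \<bar>Y t \<omega>\<bar> \<le> c" using R_elim(2)[OF Y] by auto
  show "\<And>k. pr Y (b k) \<in> borel_measurable M" "pr Y x \<in> borel_measurable M" by auto
  have "(\<Sum>k. \<integral>\<^sup>+\<omega>. ennreal \<bar>pr Y (b k) \<omega> - pr Y x \<omega>\<bar> \<partial>M) \<le> (\<Sum>k. ennreal (c * (1/2)^k))"
  proof (rule suminf_le)
    fix k
    have "(\<integral>\<^sup>+\<omega>. ennreal \<bar>pr Y (b k) \<omega> - pr Y x \<omega>\<bar> \<partial>M) \<le> ennreal c * dist1 (b k) x"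
      by (rule pr_L1[OF Y c b x])
    also have "\<dots> \<le> ennreal c * ennreal ((1/2)^k)"
      using d[of k] by (intro mult_left_mono) auto
    also have "\<dots> = ennreal (c * (1/2)^k)" using c by (simp add: ennreal_mult)
    finally show "(\<integral>\<^sup>+\<omega>. ennreal \<bar>pr Y (b k) \<omega> - pr Y x \<omega>\<bar> \<partial>M) \<le> ennreal (c * (1/2)^k)" .
  qed auto
  also have "\<dots> = ennreal (\<Sum>k. c * (1/2)^k)"
    using c by (intro suminf_ennreal2) (auto intro!: summable_mult summable_geometric)
  also have "\<dots> < \<infinity>" by simp
  finally show "(\<Sum>k. \<integral>\<^sup>+\<omega>. ennreal \<bar>pr Y (b k) \<omega> - pr Y x \<omega>\<bar> \<partial>M) < \<infinity>" .
qed

lemma gg_ub: "gg x \<le> 2"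
  using gg_bound[of x] by linarith

lemma ereal_cancel_aux: "v - ereal p \<le> q \<Longrightarrow> v \<le> q + ereal p"
  by (cases v; cases q) auto

lemma attain:
  assumes X: "X \<in> RsT M F s T" and ne: "MM \<noteq> {}"
  shows "\<exists>x\<in>MM. \<forall>a\<in>MM. AE \<omega> in M. V X a \<omega> \<le> V X x \<omega>"
proof -
  define Q where "Q a1 a2 c \<longleftrightarrow> c \<in> MM \<and>
      (AE \<omega> in M. V X a1 \<omega> \<le> V X c \<omega> \<and> V X a2 \<omega> \<le> V X c \<omega>)" for a1 a2 c
  define dir where "dir a1 a2 = (SOME c. Q a1 a2 c)" for a1 a2
  have dirQ: "Q a1 a2 (dir a1 a2)" if "a1 \<in> MM" "a2 \<in> MM" for a1 a2
  proof -
    from directed[OF X that] obtain c where c: "c \<in> MM"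
      "AE \<omega> in M. V X a1 \<omega> \<le> V X c \<omega> \<and> V X a2 \<omega> \<le> V X c \<omega>" ..
    then have "Q a1 a2 c" unfolding Q_def by blast
    then show ?thesis unfolding dir_def by (rule someI[of "Q a1 a2"])
  qed
  have dir: "dir a1 a2 \<in> MM \<and>
      (AE \<omega> in M. V X a1 \<omega> \<le> V X (dir a1 a2) \<omega> \<and> V X a2 \<omega> \<le> V X (dir a1 a2) \<omega>)"
    if "a1 \<in> MM" "a2 \<in> MM" for a1 a2
    using dirQ[OF that] unfolding Q_def .
  define G where "G a = (\<integral>\<omega>. gg (V X a \<omega>) \<partial>M)" for a
  have Gint: "integrable M (\<lambda>\<omega>. gg (V X a \<omega>))" for a by (rule gg_int[OF P]) measurable
  have Gle: "G a \<le> 2" for a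
  proof -
    have "G a \<le> (\<integral>\<omega>. 2 \<partial>M)" unfolding G_def
      by (rule integral_mono[OF Gint]) (auto intro: gg_ub)
    then show ?thesis by (simp add: prob_space)
  qed
  define m where "m = Sup (G ` MM)"
  have bdd: "bdd_above (G ` MM)" by (rule bdd_aboveI2[where M=2]) (rule Gle)
  have "\<forall>n. \<exists>a\<in>MM. m - 1 / real (Suc n) < G a"
  proof
    fix n
    have "m - 1 / real (Suc n) < m" by simp
    then show "\<exists>a\<in>MM. m - 1 / real (Suc n) < G a"
      using less_cSupD[of "G ` MM"] ne unfolding m_def by blast
  qed
  then obtain a where a: "\<And>n. a n \<in> MM" "\<And>n. m - 1 / real (Suc n) < G (a n)" by metis
  define b where "b = rec_nat (a 0) (\<lambda>n bn. dir bn (a (Suc n)))"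
  have b0: "b 0 = a 0" and bS: "b (Suc n) = dir (b n) (a (Suc n))" for n unfolding b_def by simp_all
  have bM: "b n \<in> MM" for n by (induction n) (auto simp: b0 bS a dir)
  have bstep: "AE \<omega> in M. V X (b n) \<omega> \<le> V X (b (Suc n)) \<omega>" for n
    using dir[OF bM a(1), of n "Suc n"] unfolding bS by auto
  have ab: "AE \<omega> in M. V X (a n) \<omega> \<le> V X (b n) \<omega>" for n
  proof (cases n)
    case 0 then show ?thesis by (simp add: b0)
  next
    case (Suc n')
    have "AE \<omega> in M. V X (b n') \<omega> \<le> V X (b (Suc n')) \<omega> \<and> V X (a (Suc n')) \<omega> \<le> V X (b (Suc n')) \<omega>"
      using dir[OF bM a(1), of n' "Suc n'"] unfolding bS[symmetric] by blast
    then show ?thesis unfolding Suc by eventually_elim auto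
  qed
  have bmono: "AE \<omega> in M. V X (b n) \<omega> \<le> V X (b (n + j)) \<omega>" for n j
  proof (induction j)
    case 0 then show ?case by simp
  next
    case (Suc j) then show ?case using bstep[of "n + j"] by eventually_elim auto
  qed
  have Gab: "G (a n) \<le> G (b n)" for n
    unfolding G_def using ab[of n] by (intro integral_mono_AE Gint) (auto intro: gg_mono)
  obtain x where x: "x \<in> MM" "\<forall>e>0. \<forall>N. \<exists>n\<ge>N. dist1 (b n) x < ennreal e"
    using cluster[of b] bM by blast
  obtain r where r: "strict_mono r" "\<And>k. dist1 (b (r k)) x < ennreal ((1/2)^k)"
    using fastsub[OF x(2)] by blast
  have conv: "AE \<omega> in M. (\<lambda>k. pr Y (b (r k)) \<omega>) \<longlonglongrightarrow> pr Y x \<omega>" if "Y \<in> RsT M F s T" for Y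
    by (rule pr_conv[OF that bM x(1) r(2)])
  have key: "AE \<omega> in M. V X (b n) \<omega> \<le> V X x \<omega>" for n
  proof -
    define W where "W \<omega> = V X (b n) \<omega> - ereal (pr X x \<omega>)" for \<omega>
    have "AE \<omega> in M. W \<omega> \<le> psh x \<omega>"
    proof (rule psh_greatest)
      show "W \<in> borel_measurable M" unfolding W_def by measurable
      fix Y assume Y: "Y \<in> acc_set M F s T \<phi>"
      then have YR: "Y \<in> RsT M F s T" unfolding acc_set_def by auto
      have A1: "AE \<omega> in M. \<forall>k. V X (b n) \<omega> \<le> V X (b (n + k)) \<omega>"
        using bmono by (simp add: AE_all_countable)
      have A2: "AE \<omega> in M. \<forall>k. psh (b k) \<omega> \<le> ereal (pr Y (b k) \<omega>)"
        using psh_le[OF Y] by (simp add: AE_all_countable)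
      show "AE \<omega> in M. W \<omega> \<le> ereal (pr Y x \<omega>)"
        using A1 A2 conv[OF X] conv[OF YR]
      proof eventually_elim
        case (elim \<omega>)
        have lim: "(\<lambda>k. ereal (pr X (b (r k)) \<omega> + pr Y (b (r k)) \<omega>)) \<longlonglongrightarrow> ereal (pr X x \<omega> + pr Y x \<omega>)"
          using elim by (simp add: tendsto_add)
        have "\<forall>k\<ge>n. V X (b n) \<omega> \<le> ereal (pr X (b (r k)) \<omega> + pr Y (b (r k)) \<omega>)"
        proof safe
          fix k assume "n \<le> k"
          then have "n \<le> r k" using seq_suble[OF r(1), of k] by simp
          then obtain j where j: "r k = n + j" using le_Suc_ex by blast
          have "V X (b n) \<omega> \<le> V X (b (r k)) \<omega>" using elim(1) j by metis
          also have "\<dots> \<le> ereal (pr X (b (r k)) \<omega>) + ereal (pr Y (b (r k)) \<omega>)"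
            using elim(2) by (intro add_left_mono) auto
          finally show "V X (b n) \<omega> \<le> ereal (pr X (b (r k)) \<omega> + pr Y (b (r k)) \<omega>)" by simp
        qed
        then have "V X (b n) \<omega> \<le> ereal (pr X x \<omega> + pr Y x \<omega>)"
          by (intro LIMSEQ_le_const[OF lim]) blast
        then show ?case unfolding W_def by (cases "V X (b n) \<omega>") auto
      qed
    qed
    then show ?thesis unfolding W_def
      by eventually_elim (auto simp: add.commute dest: ereal_cancel_aux)
  qed
  have Gx: "G x = m"
  proof (rule antisym)
    show "G x \<le> m" unfolding m_def using bdd x(1) by (rule cSUP_upper2) auto
    have GbX: "G (b n) \<le> G x" for n
      unfolding G_def using key[of n] by (intro integral_mono_AE Gint) (auto intro: gg_mono)
    have "m - 1 / real (Suc n) < G x" for n using a(2)[of n] Gab[of n] GbX[of n] by linarith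
    then show "m \<le> G x"
    proof -
      assume h: "\<And>n. m - 1 / real (Suc n) < G x"
      show ?thesis
      proof (rule ccontr)
        assume "\<not> m \<le> G x"
        then obtain n where "n > 0" "inverse (real n) < m - G x"
          using ex_inverse_of_nat_less[of "m - G x"] by auto
        then have "1 / real (Suc (n - 1)) < m - G x" by (simp add: field_simps)
        with h[of "n - 1"] show False by simp
      qed
    qed
  qed
  have "\<forall>a'\<in>MM. AE \<omega> in M. V X a' \<omega> \<le> V X x \<omega>"
  proof
    fix a' assume a': "a' \<in> MM"
    define c where "c = dir a' x"
    have c: "c \<in> MM" "AE \<omega> in M. V X a' \<omega> \<le> V X c \<omega> \<and> V X x \<omega> \<le> V X c \<omega>"
      using dir[OF a' x(1)] unfolding c_def by auto
    have "G c \<le> m" unfolding m_def using bdd c(1) by (rule cSUP_upper2) auto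
    then have "(\<integral>\<omega>. gg (V X c \<omega>) \<partial>M) \<le> (\<integral>\<omega>. gg (V X x \<omega>) \<partial>M)" using Gx unfolding G_def by simp
    moreover have "AE \<omega> in M. V X x \<omega> \<le> V X c \<omega>" using c(2) by auto
    ultimately have "AE \<omega> in M. V X x \<omega> = V X c \<omega>"
      by (intro gg_AE_eq[OF P]) auto
    then show "AE \<omega> in M. V X a' \<omega> \<le> V X x \<omega>" using c(2) by eventually_elim auto
  qed
  then show ?thesis using x(1) by blast
qed

end



theorem theorem4p1:
  fixes M :: "'a measure" and F :: "nat \<Rightarrow> 'a measure" and s T :: nat
    and \<phi> :: "'a proc \<Rightarrow> 'a \<Rightarrow> real" and \<M> :: "'a proc set"
  assumes "prob_space M"
    and "\<And>t. subalgebra M (F t)"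
    and "\<And>t u. t \<le> u \<Longrightarrow> sets (F t) \<subseteq> sets (F u)"
    and "sets (F 0) = {{}, space M}"
    and "s \<le> T"
    and "monetary_utility M F s T \<phi>"
    and "\<M> \<subseteq> DsT M F s T"
    and "\<forall>X\<in>RsT M F s T. is_essinf M
           ((\<lambda>a \<omega>. ereal (pairing M F s T X a \<omega>) - phi_sharp M F s T \<phi> a \<omega>) ` \<M>)
           (\<lambda>\<omega>. ereal (\<phi> X \<omega>))"
    and "A1_compact M F \<M>"
    and "stable_concat M F \<M>"
    and "\<exists>b\<in>A1p M F. \<forall>a\<in>\<M>. \<forall>t. AE \<omega> in M. dlt a t \<omega> \<le> dlt b t \<omega>"
  shows "\<forall>X\<in>RsT M F s T. \<exists>aX\<in>\<M>. AE \<omega> in M.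
           ereal (- \<phi> (\<lambda>t \<omega>'. - X t \<omega>') \<omega>) = ereal (pairing M F s T X aX \<omega>) + phi_sharp M F s T \<phi> aX \<omega>"
proof
  fix X assume X: "X \<in> RsT M F s T"
  interpret setting M F s T \<phi> \<M>
    by (rule setting.intro[OF assms(1) assms(2) assms(3) assms(5) assms(7) assms(9) assms(10)])
  interpret prob_space M by fact
  have rep: "is_essinf M ((\<lambda>a \<omega>. ereal (pairing M F s T Y a \<omega>) - phi_sharp M F s T \<phi> a \<omega>) ` \<M>)
           (\<lambda>\<omega>. ereal (\<phi> Y \<omega>))" if "Y \<in> RsT M F s T" for Y
    using assms(8) that by blast
  have ne: "\<M> \<noteq> {}"
  proof
    assume e: "\<M> = {}"
    have "AE \<omega> in M. (\<infinity>::ereal) \<le> ereal (\<phi> X \<omega>)"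
    proof -
      have all: "\<forall>W\<in>borel_measurable M. AE \<omega> in M. W \<omega> \<le> ereal (\<phi> X \<omega>)"
        using rep[OF X] unfolding e is_essinf_def by auto
      have m: "(\<lambda>_. \<infinity>::ereal) \<in> borel_measurable M" by simp
      from bspec[OF all m] show ?thesis by simp
    qed
    then have "AE \<omega> in M. False" by simp
    then show False by simp
  qed
  obtain x where x: "x \<in> \<M>" "\<And>a. a \<in> \<M> \<Longrightarrow> AE \<omega> in M. V X a \<omega> \<le> V X x \<omega>"
    using attain[OF X ne] by blast
  have nX: "(\<lambda>t \<omega>. - X t \<omega>) \<in> RsT M F s T" by (rule R_neg[OF X])
  have up: "AE \<omega> in M. ereal (\<phi> (\<lambda>t \<omega>'. - X t \<omega>') \<omega>) \<le> ereal (pr (\<lambda>t \<omega>. - X t \<omega>) x \<omega>) - psh x \<omega>"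
    using rep[OF nX] x(1) unfolding is_essinf_def by auto
  have lo: "AE \<omega> in M. - V X x \<omega> \<le> ereal (\<phi> (\<lambda>t \<omega>'. - X t \<omega>') \<omega>)"
  proof -
    have m1: "(\<lambda>\<omega>. - V X x \<omega>) \<in> borel_measurable M" by measurable
    have m2: "\<forall>Z\<in>(\<lambda>a \<omega>. ereal (pr (\<lambda>t \<omega>. - X t \<omega>) a \<omega>) - psh a \<omega>) ` \<M>. AE \<omega> in M. - V X x \<omega> \<le> Z \<omega>"
    proof
      fix Z assume "Z \<in> (\<lambda>a \<omega>. ereal (pr (\<lambda>t \<omega>. - X t \<omega>) a \<omega>) - psh a \<omega>) ` \<M>"
      then obtain a where a: "a \<in> \<M>" "Z = (\<lambda>\<omega>. ereal (pr (\<lambda>t \<omega>. - X t \<omega>) a \<omega>) - psh a \<omega>)" by auto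
      show "AE \<omega> in M. - V X x \<omega> \<le> Z \<omega>"
        using x(2)[OF a(1)] pr_neg[OF X a(1)] unfolding a(2)
      proof eventually_elim
        case (elim \<omega>)
        then show ?case by (cases "psh a \<omega>"; cases "psh x \<omega>") auto
      qed
    qed
    have g: "\<forall>W\<in>borel_measurable M.
         (\<forall>Z\<in>(\<lambda>a \<omega>. ereal (pr (\<lambda>t \<omega>. - X t \<omega>) a \<omega>) - psh a \<omega>) ` \<M>. AE \<omega> in M. W \<omega> \<le> Z \<omega>) \<longrightarrow>
         (AE \<omega> in M. W \<omega> \<le> ereal (\<phi> (\<lambda>t \<omega>. - X t \<omega>) \<omega>))"
      using rep[OF nX] unfolding is_essinf_def by blast
    from mp[OF bspec[OF g m1] m2] show ?thesis by simp
  qed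
  have "AE \<omega> in M. ereal (- \<phi> (\<lambda>t \<omega>'. - X t \<omega>') \<omega>) = ereal (pr X x \<omega>) + psh x \<omega>"
    using up lo pr_neg[OF X x(1)]
  proof eventually_elim
    case (elim \<omega>)
    then show ?case by (cases "psh x \<omega>") auto
  qed
  then show "\<exists>aX\<in>\<M>. AE \<omega> in M.
           ereal (- \<phi> (\<lambda>t \<omega>'. - X t \<omega>') \<omega>) = ereal (pairing M F s T X aX \<omega>) + phi_sharp M F s T \<phi> aX \<omega>"
    using x(1) by blast
qed

end
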